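(* Let $d\ge2$, $n\ge2$ and let $v=v_1\cdots v_n\in\mathcal{L}(n,d)$. Consider the unfoldings of all billiard trajectories in $[0,1]^d$ which are coded by $v$ and start inside the cube $[0,1]^d$. Then for every $i$ with $2\le i\le n$, there is only one face of the tessellation that corresponds to the letter $v_i$, i.e. all these unfolded trajectories cross the same $(d-1)$-dimensional face of the tessellation at their $i$-th letter.
   Context: Billiard in the hypercube $[0,1]^d$, coded by $d$ letters: the two parallel $(d-1)$-faces orthogonal to the $i$-th coordinate axis get letter $i$; $\mathcal{L}(n,d)$ is the set of codes of length $n$ of billiard orbit segments. Unfolding: instead of reflecting a trajectory one reflects the cube, so the trajectory becomes a straight line in $\mathbb{R}^d$ tiled by the unit cubes $k+[0,1]^d$, $k\in\mathbb{Z}^d$, and each crossing of a $(d-1)$-face of this tessellation orthogonal to the $i$-th axis contributes the letter $i$. *)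

theory Defs
  imports Main "HOL.Real"
begin

text \<open>Points of R^d are functions nat => real; only coordinates 1..d are used.
  Letters of the code are the coordinate indices 1..d.\<close>

definition unfold :: "(nat \<Rightarrow> real) \<Rightarrow> (nat \<Rightarrow> real) \<Rightarrow> real \<Rightarrow> nat \<Rightarrow> real" where
  "unfold x w t = (\<lambda>j. x j + t * w j)"

definition hits :: "nat \<Rightarrow> (nat \<Rightarrow> real) \<Rightarrow> nat \<Rightarrow> bool" where
  "hits d p j \<longleftrightarrow> j \<in> {1..d} \<and> p j \<in> \<int>"

text \<open>The unfolded segment t in (0,T] of the line x + t w crosses faces of the tessellation
  exactly at the strictly increasing times ts, each crossing is through the relative
  interior of a (d-1)-face (only one coordinate is an integer), and the k-th crossing is
  orthogonal to axis v!k.  Hence v is the code of the segment.\<close>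
definition coded_segment ::
  "nat \<Rightarrow> (nat \<Rightarrow> real) \<Rightarrow> (nat \<Rightarrow> real) \<Rightarrow> real \<Rightarrow> real list \<Rightarrow> nat list \<Rightarrow> bool" where
  "coded_segment d x w T ts v \<longleftrightarrow>
     sorted_wrt (<) ts \<and> length ts = length v \<and>
     set ts = {t. 0 < t \<and> t \<le> T \<and> (\<exists>j. hits d (unfold x w t) j)} \<and>
     (\<forall>k < length ts. \<forall>j. hits d (unfold x w (ts ! k)) j \<longleftrightarrow> j = v ! k)"

definition billiard_language :: "nat \<Rightarrow> nat \<Rightarrow> nat list set" ("\<L>") where
  "\<L> n d = {v. length v = n \<and>
     (\<exists>x w T ts. (\<forall>j\<in>{1..d}. 0 \<le> x j \<and> x j \<le> 1) \<and> coded_segment d x w T ts v)}"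

definition tess_face :: "nat \<Rightarrow> nat \<Rightarrow> (nat \<Rightarrow> int) \<Rightarrow> (nat \<Rightarrow> real) set" where
  "tess_face d j m = {y. y j = of_int (m j) \<and>
     (\<forall>l\<in>{1..d}. l \<noteq> j \<longrightarrow> of_int (m l) \<le> y l \<and> y l \<le> of_int (m l) + 1)}"

end

theory Submission
  imports Defs
begin

lemma int_floor_eq: "(r::real) \<in> \<int> \<Longrightarrow> of_int \<lfloor>r\<rfloor> = r"
  by (metis Ints_cases floor_of_int)

lemma key:
  assumes x: "0 < x l" and x1: "x l < 1" and w: "0 < w l" and l: "l \<in> {1..d}"
    and cs: "coded_segment d x w T ts v" and i: "i < length ts"
  shows "card {k. k \<le> i \<and> v!k = l} = nat \<lfloor>x l + ts!i * w l\<rfloor>"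
proof -
  have sw: "sorted_wrt (<) ts" and len: "length ts = length v"
    and st: "set ts = {t. 0 < t \<and> t \<le> T \<and> (\<exists>j. hits d (unfold x w t) j)}"
    and hv: "\<And>k j. k < length ts \<Longrightarrow> hits d (unfold x w (ts ! k)) j \<longleftrightarrow> j = v ! k"
    using cs unfolding coded_segment_def by auto
  have lt: "\<And>a b. a < b \<Longrightarrow> b < length ts \<Longrightarrow> ts!a < ts!b"
    using sw by (simp add: sorted_wrt_iff_nth_less)
  have le: "\<And>a b. a \<le> b \<Longrightarrow> b < length ts \<Longrightarrow> ts!a \<le> ts!b"
  proof -
    fix a b :: nat assume "a \<le> b" "b < length ts"
    then show "ts!a \<le> ts!b" using lt[of a b] by (cases "a = b") auto
  qed
  have mem: "\<And>k. k < length ts \<Longrightarrow> 0 < ts!k \<and> ts!k \<le> T"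
    proof -
    fix k assume "k < length ts"
    then have "ts!k \<in> set ts" by simp
    then show "0 < ts!k \<and> ts!k \<le> T" using st by blast
  qed
  define f where "f k = \<lfloor>x l + ts!k * w l\<rfloor>" for k
  define K where "K = {k. k \<le> i \<and> v!k = l}"
  define y where "y = x l + ts!i * w l"
  have intK: "\<And>k. k \<in> K \<Longrightarrow> x l + ts!k * w l \<in> \<int>"
  proof -
    fix k assume "k \<in> K"
    then have "k < length ts" "v!k = l" using i K_def by auto
    then have "hits d (unfold x w (ts ! k)) l" using hv by blast
    then show "x l + ts!k * w l \<in> \<int>" by (simp add: hits_def unfold_def)
  qed
  have inj: "inj_on f K"
  proof (rule inj_onI)
    fix a b assume a: "a \<in> K" and b: "b \<in> K" and e: "f a = f b"
    have "x l + ts!a * w l = x l + ts!b * w l"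
    proof -
      have "f a = \<lfloor>x l + ts!a * w l\<rfloor>" "f b = \<lfloor>x l + ts!b * w l\<rfloor>" using f_def by auto
      then have "real_of_int \<lfloor>x l + ts!a * w l\<rfloor> = real_of_int \<lfloor>x l + ts!b * w l\<rfloor>" using e by simp
      then show ?thesis unfolding int_floor_eq[OF intK[OF a]] int_floor_eq[OF intK[OF b]] .
    qed
    then have "ts!a = ts!b" using w by simp
    moreover have "a < length ts" "b < length ts" using a b i K_def by auto
    ultimately show "a = b" using lt[of a b] lt[of b a] by (cases a b rule: linorder_cases) auto
  qed
  have img: "f ` K = {1..\<lfloor>y\<rfloor>}"
  proof
    show "f ` K \<subseteq> {1..\<lfloor>y\<rfloor>}"
    proof
      fix z assume "z \<in> f ` K"
      then obtain k where k: "k \<in> K" and z: "z = f k" by auto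
      have kl: "k < length ts" "k \<le> i" using k i K_def by auto
      have "0 < ts!k" using mem[OF kl(1)] by simp
      then have p: "0 < x l + ts!k * w l" using x w by (simp add: add_pos_pos)
      have "ts!k \<le> ts!i" using le[OF kl(2) i] .
      then have q: "x l + ts!k * w l \<le> y" using w y_def by (simp add: mult_right_mono)
      have "of_int z = x l + ts!k * w l" using z f_def int_floor_eq[OF intK[OF k]] by simp
      then show "z \<in> {1..\<lfloor>y\<rfloor>}" using p q
        by (simp add: le_floor_iff)
    qed
  next
    show "{1..\<lfloor>y\<rfloor>} \<subseteq> f ` K"
    proof
      fix z assume z: "z \<in> {1..\<lfloor>y\<rfloor>}"
      define s where "s = (of_int z - x l) / w l"
      have z1: "(1::real) \<le> of_int z" using z by simp
      have zy: "of_int z \<le> y" using z by (simp add: le_floor_iff)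
      have s0: "0 < s" using z1 x1 w s_def by (simp add: divide_pos_pos)
      have xs: "x l + s * w l = of_int z" using w s_def by simp
      have "s * w l \<le> ts!i * w l" using xs zy y_def by simp
      then have si: "s \<le> ts!i" using w by simp
      have "s \<le> T" using si mem[OF i] by linarith
      moreover have "hits d (unfold x w s) l" using xs l by (simp add: hits_def unfold_def)
      ultimately have "s \<in> set ts" unfolding st using s0 by blast
      then obtain k where k: "k < length ts" "ts!k = s" by (auto simp: in_set_conv_nth)
      have "v!k = l" using hv[OF k(1), of l] k(2) \<open>hits d (unfold x w s) l\<close> by simp
      moreover have "k \<le> i" proof (rule ccontr)
        assume "\<not> k \<le> i"
        then have "ts!i < ts!k" using lt[of i k] k by simp
        then show False using k si by simp
      qed
      ultimately have "k \<in> K" using K_def by simp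
      moreover have "f k = z" using f_def k xs by simp
      ultimately show "z \<in> f ` K" by blast
    qed
  qed
  have "card K = card {1..\<lfloor>y\<rfloor>}" using card_image[OF inj] img by simp
  then show ?thesis using K_def y_def by simp
qed

theorem mainTheorem10:
  fixes d n :: nat and v :: "nat list"
  assumes "d \<ge> 2" and "n \<ge> 2" and "v \<in> \<L> n d"
  shows "\<forall>i\<in>{2..n}. \<exists>m :: nat \<Rightarrow> int.
           \<forall>x w T ts.
             (\<forall>j\<in>{1..d}. 0 < x j \<and> x j < 1) \<and> (\<forall>j\<in>{1..d}. 0 < w j) \<and>
             coded_segment d x w T ts v
             \<longrightarrow> unfold x w (ts ! (i - 1)) \<in> tess_face d (v ! (i - 1)) m"
proof
  fix i assume iin: "i \<in> {2..n}"
  have lv: "length v = n" using assms(3) billiard_language_def by auto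
  show "\<exists>m :: nat \<Rightarrow> int.
           \<forall>x w T ts.
             (\<forall>j\<in>{1..d}. 0 < x j \<and> x j < 1) \<and> (\<forall>j\<in>{1..d}. 0 < w j) \<and>
             coded_segment d x w T ts v
             \<longrightarrow> unfold x w (ts ! (i - 1)) \<in> tess_face d (v ! (i - 1)) m"
  proof (intro exI allI impI)
    fix x w T ts
    assume h: "(\<forall>j\<in>{1..d}. 0 < x j \<and> x j < 1) \<and> (\<forall>j\<in>{1..d}. 0 < w j) \<and>
             coded_segment d x w T ts v"
    then have cs: "coded_segment d x w T ts v" by blast
    have len: "length ts = n" using cs lv unfolding coded_segment_def by auto
    have i: "i - 1 < length ts" using iin len by auto
    have hv: "\<And>k j. k < length ts \<Longrightarrow> hits d (unfold x w (ts ! k)) j \<longleftrightarrow> j = v ! k"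
      and st: "set ts = {t. 0 < t \<and> t \<le> T \<and> (\<exists>j. hits d (unfold x w t) j)}"
      using cs unfolding coded_segment_def by auto
    define t where "t = ts ! (i - 1)"
    have "t \<in> set ts" using i t_def by simp
    then obtain j0 where "hits d (unfold x w t) j0" using st by blast
    then have hj: "hits d (unfold x w t) (v!(i-1))" using hv i t_def by blast
    then have vd: "v!(i-1) \<in> {1..d}" by (simp add: hits_def)
    have K: "\<And>l. l \<in> {1..d} \<Longrightarrow> card {k. k \<le> i - 1 \<and> v!k = l} = nat \<lfloor>x l + t * w l\<rfloor>"
      using key[OF _ _ _ _ cs i] h t_def by auto
    have pos: "\<And>l. l \<in> {1..d} \<Longrightarrow> 0 < x l + t * w l"
      proof -
      fix l assume l: "l \<in> {1..d}"
      have "0 < t" using st \<open>t \<in> set ts\<close> by auto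
      then have "0 < t * w l" using h l by simp
      then show "0 < x l + t * w l" using h l by (simp add: add_pos_pos)
    qed
    show "unfold x w (ts ! (i - 1)) \<in> tess_face d (v ! (i - 1))
             (\<lambda>l. int (card {k. k \<le> i - 1 \<and> v!k = l}))"
      unfolding tess_face_def
    proof (intro CollectI conjI ballI impI)
      let ?j = "v!(i-1)"
      have zi: "x ?j + t * w ?j \<in> \<int>" using hj by (simp add: hits_def unfold_def)
      have f0: "0 \<le> \<lfloor>x ?j + t * w ?j\<rfloor>" using pos[OF vd] by simp
      have "real_of_int (int (card {k. k \<le> i - 1 \<and> v ! k = ?j})) = of_int \<lfloor>x ?j + t * w ?j\<rfloor>"
        using K[OF vd] f0 by simp
      also have "\<dots> = x ?j + t * w ?j" using int_floor_eq[OF zi] .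
      finally show "unfold x w (ts ! (i - 1)) (v ! (i - 1)) =
          of_int (int (card {k. k \<le> i - 1 \<and> v ! k = v ! (i - 1)}))"
        unfolding unfold_def t_def[symmetric] by simp
    next
      fix l assume l: "l \<in> {1..d}" "l \<noteq> v ! (i - 1)"
      have f0: "0 \<le> \<lfloor>x l + t * w l\<rfloor>" using pos[OF l(1)] by simp
      have e: "real_of_int (int (card {k. k \<le> i - 1 \<and> v ! k = l})) = of_int \<lfloor>x l + t * w l\<rfloor>"
        using K[OF l(1)] f0 by simp
      show "of_int (int (card {k. k \<le> i - 1 \<and> v ! k = l})) \<le> unfold x w (ts ! (i - 1)) l"
        unfolding e unfolding unfold_def t_def[symmetric] by simp
      show "unfold x w (ts ! (i - 1)) l \<le> of_int (int (card {k. k \<le> i - 1 \<and> v ! k = l})) + 1"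
        unfolding e unfolding unfold_def t_def[symmetric] by linarith
    qed
  qed
qed

end
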